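(* Let $H=(W,F)$ be a connected simple undirected graph with a designated root $r_1\in W$ and a set of terminals $S=\{s_1,\dots,s_k\}\subseteq W\setminus\{r_1\}$ with $k\ge 2$, such that no edge of $H$ joins two terminals. Let $H'$, $H'_1$, $H'_2$, $M_1$, $M_2$ and $g$ be as defined in the context. Then for every set $J$ that is a basis of both $M_1$ and $M_2$, the edge set $g(J)$ is an $S$-wide spanning tree of $H$.
   Context: A spanning tree $T$ of $H$ is $S$-wide if every connected component of $T-r_1$ contains at most one terminal. $H'=(W',F')$ is obtained from $H$ by adding $k-1$ new vertices $r_2,\dots,r_k$ and, for each edge $r_1x\in F$ and each $i\in\{2,\dots,k\}$, a new edge $r_ix$. $H'_1$ is the multigraph obtained from $H'$ by identifying $r_1,\dots,r_k$ into a single vertex (keeping parallel edges), and $H'_2$ is the multigraph obtained from $H'$ by identifying $s_1,\dots,s_k$ into a single vertex (keeping parallel edges and loops); both have edge set $F'$. $M_1$ and $M_2$ are the graphic matroids of $H'_1$ and $H'_2$ on ground set $F'$. Define $f:F'\to F$ by $f(xy)=r_1y$ if $x\in\{r_1,\dots,r_k\}$, $f(xy)=xr_1$ if $y\in\{r_1,\dots,r_k\}$, and $f(xy)=xy$ otherwise; for $J\subseteq F'$, $g(J)=\{f(e):e\in J\}$. *)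

theory Defs
  imports Main
begin

text \<open>A multigraph is given by its edges (of type 'e) and a map ends assigning to
each edge its set of endpoints (a singleton for a loop, a 2-set otherwise).
Parallel edges are distinct edge objects with equal endpoint sets.\<close>

definition has_cycle :: "('e \<Rightarrow> 'u set) \<Rightarrow> 'e set \<Rightarrow> bool" where
  "has_cycle ends J \<longleftrightarrow>
     (\<exists>es vs. length es \<ge> 1 \<and> length vs = length es \<and> distinct es \<and> distinct vs \<and>
        set es \<subseteq> J \<and>
        (\<forall>i < length es. ends (es ! i) = {vs ! i, vs ! ((i + 1) mod length es)}))"

definition graphic_indep :: "'e set \<Rightarrow> ('e \<Rightarrow> 'u set) \<Rightarrow> 'e set \<Rightarrow> bool" where
  "graphic_indep E ends J \<longleftrightarrow> J \<subseteq> E \<and> \<not> has_cycle ends J"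

definition graphic_basis :: "'e set \<Rightarrow> ('e \<Rightarrow> 'u set) \<Rightarrow> 'e set \<Rightarrow> bool" where
  "graphic_basis E ends J \<longleftrightarrow> graphic_indep E ends J \<and>
     (\<forall>J'. graphic_indep E ends J' \<and> J \<subseteq> J' \<longrightarrow> J' = J)"

definition simple_graph :: "'v set \<Rightarrow> 'v set set \<Rightarrow> bool" where
  "simple_graph V E \<longleftrightarrow> finite V \<and> (\<forall>e\<in>E. \<exists>x y. e = {x, y} \<and> x \<noteq> y \<and> x \<in> V \<and> y \<in> V)"

definition reach :: "'v set \<Rightarrow> 'v set set \<Rightarrow> 'v \<Rightarrow> 'v \<Rightarrow> bool" where
  "reach V E x y \<longleftrightarrow> (x, y) \<in> {(a, b). {a, b} \<in> E \<and> a \<in> V \<and> b \<in> V}\<^sup>*"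

definition connected_graph :: "'v set \<Rightarrow> 'v set set \<Rightarrow> bool" where
  "connected_graph V E \<longleftrightarrow> (\<forall>x\<in>V. \<forall>y\<in>V. reach V E x y)"

definition spanning_tree :: "'v set \<Rightarrow> 'v set set \<Rightarrow> 'v set set \<Rightarrow> bool" where
  "spanning_tree V E T \<longleftrightarrow> T \<subseteq> E \<and> connected_graph V T \<and> \<not> has_cycle id T"

text \<open>T - r: delete vertex r and its incident edges. S-wide: each component of T - r
contains at most one terminal, i.e. no two distinct terminals are connected in T - r.\<close>
definition S_wide :: "'v set \<Rightarrow> 'v set set \<Rightarrow> 'v \<Rightarrow> 'v set \<Rightarrow> 'v set set \<Rightarrow> bool" where
  "S_wide V E r S T \<longleftrightarrow> spanning_tree V E T \<and>
     (\<forall>s\<in>S. \<forall>s'\<in>S. s \<noteq> s' \<longrightarrow> \<not> reach (V - {r}) {e \<in> T. r \<notin> e} s s')"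

text \<open>Vertices of H' live in 'v + nat: Inl v is an original vertex, Inr i is the new r_i
(2 \<le> i \<le> k).\<close>

definition Hp_edges :: "'v set set \<Rightarrow> 'v \<Rightarrow> nat \<Rightarrow> ('v + nat) set set" where
  "Hp_edges F r1 k = (\<lambda>e. Inl ` e) ` F \<union>
     {{Inr i, Inl x} | i x. i \<in> {2..k} \<and> {r1, x} \<in> F}"

text \<open>H'_1: identify r_1,...,r_k.\<close>
definition ends1 :: "'v \<Rightarrow> ('v + nat) set \<Rightarrow> ('v + nat) set" where
  "ends1 r1 e = (\<lambda>u. case u of Inl v \<Rightarrow> Inl v | Inr _ \<Rightarrow> Inl r1) ` e"

text \<open>H'_2: identify s_1,...,s_k.\<close>
definition ends2 :: "(nat \<Rightarrow> 'v) \<Rightarrow> nat \<Rightarrow> ('v + nat) set \<Rightarrow> ('v + nat) set" where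
  "ends2 s k e = (\<lambda>u. if u \<in> Inl ` s ` {1..k} then Inl (s 1) else u) ` e"

text \<open>The map f : F' \<rightarrow> F (r_i x \<mapsto> r_1 x, other edges unchanged) and g(J) = f ` J.\<close>
definition fmap :: "'v \<Rightarrow> ('v + nat) set \<Rightarrow> 'v set" where
  "fmap r1 e = (\<lambda>u. case u of Inl v \<Rightarrow> v | Inr _ \<Rightarrow> r1) ` e"

definition gmap :: "'v \<Rightarrow> ('v + nat) set set \<Rightarrow> 'v set set" where
  "gmap r1 J = fmap r1 ` J"

end

theory Submission
  imports Defs
begin

lemma rtrancl_path:
  assumes "(a,b) \<in> R\<^sup>*"
  shows "\<exists>xs. xs \<noteq> [] \<and> xs!0 = a \<and> xs!(length xs - 1) = b \<and> distinct xs \<and>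
     (\<forall>i. Suc i < length xs \<longrightarrow> (xs!i, xs!Suc i) \<in> R)"
  using assms
proof (induction rule: converse_rtrancl_induct)
  case base
  then show ?case by (rule exI[of _ "[b]"]) auto
next
  case (step a c)
  then obtain xs where xs: "xs \<noteq> []" "xs!0 = c" "xs!(length xs - 1) = b" "distinct xs"
     "\<forall>i. Suc i < length xs \<longrightarrow> (xs!i, xs!Suc i) \<in> R" by blast
  show ?case
  proof (cases "a \<in> set xs")
    case True
    then obtain j where j: "j < length xs" "xs!j = a" by (auto simp: in_set_conv_nth)
    show ?thesis
      apply (rule exI[of _ "drop j xs"])
      using xs j by (auto simp: nth_drop)
  next
    case False
    show ?thesis
      apply (rule exI[of _ "a # xs"])
      using xs False step(1) by (auto simp: nth_Cons split: nat.splits)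
  qed
qed

lemma cycle_edge_reach:
  assumes "has_cycle ends (insert e J)" "\<not> has_cycle ends J"
  shows "\<exists>u v. ends e = {u,v} \<and> (u,v) \<in> {(u,v). \<exists>e'\<in>J. ends e' = {u,v}}\<^sup>*"
proof -
  define R where "R = {(u,v). \<exists>e'\<in>J. ends e' = {u,v}}"
  obtain es vs where c: "length es \<ge> 1" "length vs = length es" "distinct es" "distinct vs"
    "set es \<subseteq> insert e J"
    "\<forall>i < length es. ends (es ! i) = {vs ! i, vs ! ((i + 1) mod length es)}"
    using assms(1) unfolding has_cycle_def by blast
  define n where "n = length es"
  have "e \<in> set es"
  proof (rule ccontr)
    assume "e \<notin> set es"
    then have "set es \<subseteq> J" using c by auto
    then have "has_cycle ends J" unfolding has_cycle_def using c by blast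
    then show False using assms(2) by blast
  qed
  then obtain m where m: "m < n" "es!m = e" by (auto simp: in_set_conv_nth n_def)
  have edge: "(vs!i, vs!((i+1) mod n)) \<in> R" if "i < n" "i \<noteq> m" for i
  proof -
    have "es!i \<noteq> e" using m that c(3) by (metis n_def nth_eq_iff_index_eq)
    then have "es!i \<in> J" using c(5) that by (metis insertE n_def nth_mem subsetD)
    then show ?thesis using c(6) that by (auto simp: R_def n_def)
  qed
  have n1: "n \<ge> 1" using c n_def by simp
  have walk: "t \<le> n - 1 \<Longrightarrow> (vs!((m+1) mod n), vs!((m+1+t) mod n)) \<in> R\<^sup>*" for t
  proof (induction t)
    case 0 then show ?case by simp
  next
    case (Suc t)
    define i where "i = (m+1+t) mod n"
    have "i < n" using n1 by (simp add: i_def)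
    moreover have "i \<noteq> m"
    proof (cases "m+1+t < n")
      case True then show ?thesis by (simp add: i_def)
    next
      case False
      then have "i = m+1+t-n" using Suc.prems m(1)
        by (simp add: i_def mod_if) 
      then show ?thesis using Suc.prems m(1) False by linarith
    qed
    ultimately have "(vs!i, vs!((i+1) mod n)) \<in> R" by (rule edge)
    moreover have "(i+1) mod n = (m+1+Suc t) mod n" by (simp add: i_def mod_Suc_eq)
    ultimately show ?case using Suc by (simp add: i_def)
  qed
  have "(m+1+(n-1)) mod n = m" using n1 m by simp
  with walk[of "n-1"] have "(vs!((m+1) mod n), vs!m) \<in> R\<^sup>*" by simp
  moreover have "ends e = {vs!((m+1) mod n), vs!m}" using c(6) m by (auto simp: n_def)
  ultimately show ?thesis unfolding R_def by blast
qed


lemma ends1_eq: "ends1 r1 e = Inl ` fmap r1 e"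
  unfolding ends1_def fmap_def image_image
  by (rule image_cong) (auto split: sum.splits)

lemma fmap_Inl: "fmap r1 (Inl ` e) = e"
  unfolding fmap_def image_image by simp

lemma fmap_edge: "fmap r1 {Inr i, Inl x} = {r1, x}"
  unfolding fmap_def by simp

lemma ends2_Inl: "ends2 s k (Inl ` A) = (\<lambda>v. if v \<in> s`{1..k} then Inl (s 1) else Inl v) ` A"
  unfolding ends2_def image_image
  by (rule image_cong) auto

lemma gmap_sub: "J \<subseteq> Hp_edges F r1 k \<Longrightarrow> gmap r1 J \<subseteq> F"
  unfolding gmap_def Hp_edges_def by (auto simp: fmap_Inl fmap_edge)

lemma T0_lift: "J \<subseteq> Hp_edges F r1 k \<Longrightarrow> t \<in> gmap r1 J \<Longrightarrow> r1 \<notin> t \<Longrightarrow> Inl ` t \<in> J"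
  unfolding gmap_def Hp_edges_def by (auto simp: fmap_Inl fmap_edge)

lemma lift_cycle:
  assumes "has_cycle id (fmap r1 ` J)"
  shows "has_cycle (ends1 r1) J"
proof -
  obtain es vs where c: "length es \<ge> 1" "length vs = length es" "distinct es" "distinct vs"
    "set es \<subseteq> fmap r1 ` J"
    "\<forall>i < length es. es ! i = {vs ! i, vs ! ((i + 1) mod length es)}"
    using assms unfolding has_cycle_def by auto
  define pick where "pick t = (SOME e. e \<in> J \<and> fmap r1 e = t)" for t
  have pk: "pick t \<in> J \<and> fmap r1 (pick t) = t" if "t \<in> fmap r1 ` J" for t
    unfolding pick_def by (rule someI_ex) (use that in auto)
  have inj: "inj_on pick (set es)" using pk c(5) by (metis inj_onI subsetD)
  show ?thesis unfolding has_cycle_def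
  proof (intro exI conjI)
    show "1 \<le> length (map pick es)" using c by simp
    show "length (map Inl vs) = length (map pick es)" using c by simp
    show "distinct (map pick es)" using inj c(3) by (simp add: distinct_map)
    show "distinct (map Inl vs :: ('a + nat) list)" using c(4) by (simp add: distinct_map)
    show "set (map pick es) \<subseteq> J" using pk c(5) by auto
    show "\<forall>i<length (map pick es). ends1 r1 (map pick es ! i) =
      {map Inl vs ! i, map Inl vs ! ((i + 1) mod length (map pick es))}"
    proof (intro allI impI)
      fix i assume i: "i < length (map pick es)"
      then have "es!i \<in> fmap r1 ` J" using c(5) by auto
      then have "ends1 r1 (pick (es!i)) = Inl ` (es!i)" using pk ends1_eq by metis
      then show "ends1 r1 (map pick es ! i) =
      {map Inl vs ! i, map Inl vs ! ((i + 1) mod length (map pick es))}"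
      proof -
        have l: "(i+1) mod length es < length vs" using c(2) i by (metis length_map mod_less_divisor order.strict_trans1 zero_less_iff_neq_zero le0 not_less0)
        have "i < length vs" using c(2) i by simp
        then show ?thesis using i c(6) l \<open>ends1 r1 (pick (es!i)) = Inl ` (es!i)\<close>
          by (simp only: nth_map length_map) simp
      qed
    qed
  qed
qed


lemma rtrancl_map:
  assumes "(u,v) \<in> R\<^sup>*" "\<And>x y. (x,y) \<in> R \<Longrightarrow> (p x, p y) \<in> Q"
  shows "(p u, p v) \<in> Q\<^sup>*"
  using assms(1)
proof (induction rule: rtrancl_induct)
  case base then show ?case by simp
next
  case (step y z) then show ?case using assms(2) by (meson rtrancl.rtrancl_into_rtrancl)
qed

theorem lemma7:
  fixes W :: "'v set" and F :: "'v set set" and r1 :: 'v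
    and s :: "nat \<Rightarrow> 'v" and k :: nat and J :: "('v + nat) set set"
  assumes "simple_graph W F"
    and "connected_graph W F"
    and "r1 \<in> W"
    and "k \<ge> 2"
    and "inj_on s {1..k}"
    and "s ` {1..k} \<subseteq> W - {r1}"
    and "\<forall>i\<in>{1..k}. \<forall>j\<in>{1..k}. {s i, s j} \<notin> F"
    and "graphic_basis (Hp_edges F r1 k) (ends1 r1) J"
    and "graphic_basis (Hp_edges F r1 k) (ends2 s k) J"
  shows "S_wide W F r1 (s ` {1..k}) (gmap r1 J)"
proof -
  define S where "S = s ` {1..k}"
  define T where "T = gmap r1 J"
  have JH: "J \<subseteq> Hp_edges F r1 k" and ac1: "\<not> has_cycle (ends1 r1) J"
    and mx: "\<And>J'. graphic_indep (Hp_edges F r1 k) (ends1 r1) J' \<Longrightarrow> J \<subseteq> J' \<Longrightarrow> J' = J"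
    using assms(8) unfolding graphic_basis_def graphic_indep_def by blast+
  have ac2: "\<not> has_cycle (ends2 s k) J"
    using assms(9) unfolding graphic_basis_def graphic_indep_def by blast
  have TF: "T \<subseteq> F" unfolding T_def using gmap_sub[OF JH] .
  have FW: "x \<in> W \<and> y \<in> W" if "{x,y} \<in> F" for x y
  proof -
    have "\<forall>e\<in>F. \<exists>a b. e = {a, b} \<and> a \<noteq> b \<and> a \<in> W \<and> b \<in> W"
      using assms(1) unfolding simple_graph_def by (rule conjunct2)
    from this[rule_format, OF that] obtain a b where "{x,y} = {a,b}" "a \<in> W" "b \<in> W"
      by blast
    then show ?thesis by (auto simp: doubleton_eq_iff)
  qed
  have acyc: "\<not> has_cycle id T"
    using lift_cycle[of r1 J] ac1 unfolding T_def gmap_def by blast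
  define RT where "RT = {(a, b). {a, b} \<in> T \<and> a \<in> W \<and> b \<in> W}"
  define R1 where "R1 = {(u,v). \<exists>e'\<in>J. ends1 r1 e' = {u,v}}"
  define p where "p = (\<lambda>u::'v + nat. case u of Inl v \<Rightarrow> v | Inr _ \<Rightarrow> r1)"
  have R1RT: "(p x, p y) \<in> RT" if xyR: "(x,y) \<in> R1" for x y
  proof -
    obtain e' where e': "e' \<in> J" "ends1 r1 e' = {x,y}" using xyR unfolding R1_def by blast
    then have eq: "Inl ` fmap r1 e' = {x,y}" by (simp add: ends1_eq)
    then obtain x0 y0 where xy: "x = Inl x0" "y = Inl y0" by blast
    then have "(Inl ` fmap r1 e' :: ('v + nat) set) = Inl ` {x0,y0}" using eq by simp
    then have "fmap r1 e' = {x0,y0}" by (metis inj_Inl inj_image_eq_iff)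
    moreover have "fmap r1 e' \<in> T" using e' unfolding T_def gmap_def by blast
    ultimately show ?thesis using TF FW xy unfolding RT_def p_def by auto
  qed
  have symRT: "(b,a) \<in> RT" if "(a,b) \<in> RT" for a b
    using that unfolding RT_def by (auto simp: insert_commute)
  have step: "(a,b) \<in> RT\<^sup>*" if ab: "{a,b} \<in> F" for a b
  proof -
    define e :: "('v + nat) set" where "e = Inl ` {a,b}"
    have eH: "e \<in> Hp_edges F r1 k" unfolding e_def Hp_edges_def using ab by blast
    have aW: "a \<in> W" "b \<in> W" using FW ab by auto
    show ?thesis
    proof (cases "e \<in> J")
      case True
      then have "{a,b} \<in> T" unfolding T_def gmap_def e_def using fmap_Inl by (metis imageI)
      then show ?thesis using aW unfolding RT_def by auto
    next
      case False
      have "\<not> graphic_indep (Hp_edges F r1 k) (ends1 r1) (insert e J)"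
        using mx[of "insert e J"] False by auto
      then have "has_cycle (ends1 r1) (insert e J)"
        using JH eH unfolding graphic_indep_def by auto
      from cycle_edge_reach[OF this ac1] obtain u v where
        uv: "ends1 r1 e = {u,v}" "(u,v) \<in> R1\<^sup>*" unfolding R1_def by blast
      have "ends1 r1 e = {Inl a, Inl b}" unfolding e_def ends1_eq fmap_Inl by simp
      with uv(1) have "{u,v} = {Inl a, Inl b}" by simp
      then have "(u = Inl a \<and> v = Inl b) \<or> (u = Inl b \<and> v = Inl a)"
        by (simp add: doubleton_eq_iff)
      then have "{p u, p v} = {a, b}" unfolding p_def by auto
      moreover have "(p u, p v) \<in> RT\<^sup>*" using rtrancl_map[OF uv(2) R1RT] .
      moreover have "(p v, p u) \<in> RT\<^sup>*"
      proof -
        have "(p v, p u) \<in> (RT\<inverse>)\<^sup>*" using \<open>(p u, p v) \<in> RT\<^sup>*\<close>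
          by (simp add: rtrancl_converse)
        moreover have "RT\<inverse> = RT" using symRT by auto
        ultimately show ?thesis by simp
      qed
      ultimately show ?thesis by (auto simp: doubleton_eq_iff)
    qed
  qed
  have conn: "connected_graph W T"
    unfolding connected_graph_def reach_def
  proof (intro ballI)
    fix x y assume xy: "x \<in> W" "y \<in> W"
    then have "(x, y) \<in> {(a, b). {a, b} \<in> F \<and> a \<in> W \<and> b \<in> W}\<^sup>*"
      using assms(2) unfolding connected_graph_def reach_def by blast
    then have "(x,y) \<in> RT\<^sup>*"
    proof (induction rule: rtrancl_induct)
      case base then show ?case by simp
    next
      case (step y z) then show ?case using \<open>\<And>a b. {a,b} \<in> F \<Longrightarrow> (a,b) \<in> RT\<^sup>*\<close>[of y z]
        by auto
    qed
    then show "(x, y) \<in> {(a, b). {a, b} \<in> T \<and> a \<in> W \<and> b \<in> W}\<^sup>*" unfolding RT_def .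
  qed
  have wide: "\<not> reach (W - {r1}) {e \<in> T. r1 \<notin> e} a b" if ab: "a \<in> S" "b \<in> S" "a \<noteq> b" for a b
  proof
    assume "reach (W - {r1}) {e \<in> T. r1 \<notin> e} a b"
    then have "(a,b) \<in> {(x, y). {x, y} \<in> {e \<in> T. r1 \<notin> e} \<and> x \<in> W - {r1} \<and> y \<in> W - {r1}}\<^sup>*"
      unfolding reach_def .
    from rtrancl_path[OF this] obtain xs where xs: "xs \<noteq> []" "xs!0 = a" "xs!(length xs - 1) = b" "distinct xs"
      "\<forall>i. Suc i < length xs \<longrightarrow> (xs!i, xs!Suc i) \<in> {(x, y). {x, y} \<in> {e \<in> T. r1 \<notin> e} \<and> x \<in> W - {r1} \<and> y \<in> W - {r1}}"
      by blast
    have xs5: "{xs!i, xs!Suc i} \<in> T \<and> r1 \<notin> {xs!i, xs!Suc i}" if "Suc i < length xs" for i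
      using xs(5) that by blast
    define L where "L = length xs - 1"
    have L1: "L < length xs" using xs(1) unfolding L_def by simp
    have L2: "xs!L \<in> S" using xs(3) ab(2) unfolding L_def by simp
    have L0: "0 < L" using xs(2,3) ab(3) unfolding L_def by (metis neq0_conv)
    define q where "q = (LEAST q. 0 < q \<and> q < length xs \<and> xs!q \<in> S)"
    have q: "0 < q \<and> q < length xs \<and> xs!q \<in> S" unfolding q_def
      by (rule LeastI[of _ L]) (use L0 L1 L2 in auto)
    have qmin: "xs!j \<notin> S" if "0 < j" "j < q" for j
      using not_less_Least[of j "\<lambda>q. 0 < q \<and> q < length xs \<and> xs!q \<in> S"] that q
      unfolding q_def[symmetric] by auto
    define h where "h = (\<lambda>v. if v \<in> S then Inl (s 1) else (Inl v :: 'v + nat))"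
    have s1: "s 1 \<in> S" unfolding S_def using assms(4) by auto
    define vs where "vs = map h (take q xs)"
    define es where "es = map (\<lambda>m. Inl ` {xs!m, xs!Suc m} :: ('v + nat) set) [0..<q]"
    have "has_cycle (ends2 s k) J" unfolding has_cycle_def
    proof (intro exI conjI)
      show "1 \<le> length es" using q unfolding es_def by simp
      show "length vs = length es" using q unfolding es_def vs_def by simp
      show "distinct es" unfolding es_def distinct_map
      proof
        show "inj_on (\<lambda>m. Inl ` {xs!m, xs!Suc m} :: ('v + nat) set) (set [0..<q])"
        proof (rule inj_onI)
          fix m m' assume mm: "m \<in> set [0..<q]" "m' \<in> set [0..<q]"
            "(Inl ` {xs!m, xs!Suc m} :: ('v + nat) set) = Inl ` {xs!m', xs!Suc m'}"
          then have "{xs!m, xs!Suc m} = {xs!m', xs!Suc m'}" by (metis inj_Inl inj_image_eq_iff)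
          moreover have "m < length xs" "Suc m < length xs" "m' < length xs" "Suc m' < length xs"
            using mm q by auto
          ultimately show "m = m'" using xs(4)
            by (auto simp: doubleton_eq_iff nth_eq_iff_index_eq)
        qed
      qed simp
      show "distinct vs" unfolding vs_def distinct_conv_nth
      proof (intro allI impI)
        fix i j assume ij: "i < length (map h (take q xs))" "j < length (map h (take q xs))" "i \<noteq> j"
        then have ij': "i < q" "j < q" "i < length xs" "j < length xs" using q by auto
        have "xs!i \<noteq> xs!j" using ij' ij(3) xs(4) by (simp add: nth_eq_iff_index_eq)
        moreover have "xs!i \<notin> S \<or> i = 0" "xs!j \<notin> S \<or> j = 0" using qmin ij' by auto
        ultimately have "h (xs!i) \<noteq> h (xs!j)" using ij(3) s1 unfolding h_def by auto
        then show "map h (take q xs) ! i \<noteq> map h (take q xs) ! j" using ij' by simp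
      qed
      show "set es \<subseteq> J"
      proof
        fix e assume "e \<in> set es"
        then obtain m where m: "m < q" "e = Inl ` {xs!m, xs!Suc m}" unfolding es_def by auto
        then have "{xs!m, xs!Suc m} \<in> T \<and> r1 \<notin> {xs!m, xs!Suc m}" using xs5 q by auto
        then show "e \<in> J" using T0_lift[OF JH] m unfolding T_def by blast
      qed
      show "\<forall>i<length es. ends2 s k (es ! i) = {vs ! i, vs ! ((i + 1) mod length es)}"
      proof (intro allI impI)
        fix i assume i: "i < length es"
        then have iq: "i < q" unfolding es_def by simp
        have le: "length es = q" unfolding es_def by simp
        have "es ! i = Inl ` {xs!i, xs!Suc i}" using iq unfolding es_def by simp
        then have "ends2 s k (es ! i) =
            (\<lambda>v. if v \<in> s`{1..k} then Inl (s 1) else Inl v) ` {xs!i, xs!Suc i}"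
          by (simp only: ends2_Inl)
        then have e: "ends2 s k (es ! i) = {h (xs!i), h (xs!Suc i)}"
          unfolding h_def S_def by simp
        have v1: "vs ! i = h (xs!i)" using iq q unfolding vs_def by simp
        have v2: "vs ! ((i + 1) mod length es) = h (xs!Suc i)"
        proof (cases "Suc i < q")
          case True then show ?thesis using q unfolding vs_def le by simp
        next
          case False
          then have "Suc i = q" using iq by simp
          moreover have "h (xs!0) = h (xs!q)" using q xs(2) ab(1) unfolding h_def by simp
          ultimately show ?thesis using q unfolding vs_def le by simp
        qed
        show "ends2 s k (es ! i) = {vs ! i, vs ! ((i + 1) mod length es)}"
          using e v1 v2 by simp
      qed
    qed
    then show False using ac2 by blast
  qed
  have "spanning_tree W F T" unfolding spanning_tree_def using TF conn acyc by blast
  then show ?thesis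
    unfolding S_wide_def using wide unfolding S_def T_def by blast
qed

end
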